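(* Let $\mathfrak g$ be a finite-dimensional complex simple Lie algebra and $q\in\mathbb C^\times$ not a root of unity. (i) For all $w\in W$ and $\boldsymbol\varpi\in\mathcal P_q$, $\mathrm{wt}(T_w\boldsymbol\varpi)=w(\mathrm{wt}(\boldsymbol\varpi))$. (ii) Suppose $\boldsymbol\varpi_1,\boldsymbol\varpi_2\in\mathcal P_q$ satisfy $\mathrm{wt}(\boldsymbol\varpi_r)\in P^+$ for $r=1,2$, and $w_1,w_2\in W$. If $T_{w_1}\boldsymbol\varpi_1=T_{w_2}\boldsymbol\varpi_2$ then $\mathrm{wt}(\boldsymbol\varpi_1)=\mathrm{wt}(\boldsymbol\varpi_2)$, and, setting $\lambda=\mathrm{wt}(\boldsymbol\varpi_1)$, $w_1^{-1}w_2\in W(\lambda)$.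
   Context: $I=\{1,\dots,n\}$, $(a_{ij})$ the Cartan matrix of $\mathfrak g$, $\omega_i$ the fundamental weights, $\check\alpha_i$ simple coroots, $P$ the weight lattice, $P^+$ dominant weights, $W$ the Weyl group with simple reflections $s_i$; for $\lambda\in P^+$, $W(\lambda)$ is the subgroup generated by $\{s_i:\lambda(\check\alpha_i)=0\}$. $d_i$ positive integers with $(d_ia_{ij})$ symmetric, $q_i=q^{d_i}$. $\mathcal P_q=\mathbb A^n$ with $\mathbb A$ the multiplicative group of rational functions with value 1 at $u=0$; $\boldsymbol\omega_{i,a}$ has $i$-th entry $1-au$ and others $1$ (these freely generate $\mathcal P_q$); $\mathrm{wt}:\mathcal P_q\to P$ is the homomorphism with $\mathrm{wt}(\boldsymbol\omega_{i,a})=\omega_i$. Braid action: $(T_i\boldsymbol\varpi)_j=\varpi_j$ if $a_{ji}=0$; $\varpi_j(u)\varpi_i(q_iu)$ if $a_{ji}=-1$; $\varpi_j(u)\varpi_i(q^3u)\varpi_i(qu)$ if $a_{ji}=-2$; $\varpi_j(u)\varpi_i(q^5u)\varpi_i(q^3u)\varpi_i(qu)$ if $a_{ji}=-3$; $(T_i\boldsymbol\varpi)_i=1/\varpi_i(q_i^2u)$; $T_w=T_{i_1}\cdots T_{i_k}$ for a reduced expression $w=s_{i_1}\cdots s_{i_k}$. *)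

theory Defs
  imports "HOL-Computational_Algebra.Polynomial_Factorial"
          "HOL-Computational_Algebra.Normalized_Fraction"
          "HOL-Computational_Algebra.Field_as_Ring"
begin

text \<open>Index set I = UNIV of a finite type 'i.  A Cartan matrix A :: 'i => 'i => int,
  convention a_ij = alpha_j(coroot_i), so alpha_i(coroot_j) = a_ji.\<close>

definition symmetrizes :: "('i \<Rightarrow> 'i \<Rightarrow> int) \<Rightarrow> ('i \<Rightarrow> nat) \<Rightarrow> bool" where
  "symmetrizes A d \<longleftrightarrow> (\<forall>i. d i > 0) \<and> (\<forall>i j. int (d i) * A i j = int (d j) * A j i)"

text \<open>Cartan matrix of a finite-dimensional complex simple Lie algebra: an indecomposable
  generalized Cartan matrix whose symmetrization (d_i a_ij) is positive definite
  (finite type).\<close>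
definition simple_cartan :: "('i::finite \<Rightarrow> 'i \<Rightarrow> int) \<Rightarrow> ('i \<Rightarrow> nat) \<Rightarrow> bool" where
  "simple_cartan A d \<longleftrightarrow>
     (\<forall>i. A i i = 2) \<and> (\<forall>i j. i \<noteq> j \<longrightarrow> A i j \<le> 0) \<and>
     (\<forall>i j. A i j = 0 \<longleftrightarrow> A j i = 0) \<and>
     (\<forall>J. J \<noteq> {} \<and> J \<noteq> UNIV \<longrightarrow> (\<exists>i\<in>J. \<exists>j. j \<notin> J \<and> A i j \<noteq> 0)) \<and>
     symmetrizes A d \<and>
     (\<forall>x :: 'i \<Rightarrow> real. (\<exists>i. x i \<noteq> 0) \<longrightarrow>
        (\<Sum>i\<in>UNIV. \<Sum>j\<in>UNIV. x i * real (d i) * of_int (A i j) * x j) > 0)"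

text \<open>Weights: lambda in P is encoded by its coordinates lambda(coroot_i) in the basis of
  fundamental weights.\<close>
type_synonym 'i weight = "'i \<Rightarrow> int"

definition dominant :: "'i weight \<Rightarrow> bool" where
  "dominant la \<longleftrightarrow> (\<forall>i. la i \<ge> 0)"

text \<open>Simple reflection: s_i lambda = lambda - lambda(coroot_i) alpha_i.\<close>
definition srefl :: "('i \<Rightarrow> 'i \<Rightarrow> int) \<Rightarrow> 'i \<Rightarrow> 'i weight \<Rightarrow> 'i weight" where
  "srefl A i la = (\<lambda>j. la j - la i * A j i)"

definition weyl_act :: "('i \<Rightarrow> 'i \<Rightarrow> int) \<Rightarrow> 'i list \<Rightarrow> 'i weight \<Rightarrow> 'i weight" where
  "weyl_act A ws = foldr (\<lambda>i f. srefl A i \<circ> f) ws id"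

definition reduced_word :: "('i \<Rightarrow> 'i \<Rightarrow> int) \<Rightarrow> 'i list \<Rightarrow> bool" where
  "reduced_word A ws \<longleftrightarrow> (\<forall>vs. weyl_act A vs = weyl_act A ws \<longrightarrow> length ws \<le> length vs)"

definition in_stab_subgroup :: "('i \<Rightarrow> 'i \<Rightarrow> int) \<Rightarrow> 'i weight \<Rightarrow> 'i list \<Rightarrow> bool" where
  "in_stab_subgroup A la ws \<longleftrightarrow>
     (\<exists>vs. set vs \<subseteq> {i. la i = 0} \<and> weyl_act A vs = weyl_act A ws)"

type_synonym ratfun = "complex poly fract"

definition in_A :: "ratfun \<Rightarrow> bool" where
  "in_A f \<longleftrightarrow> (case quot_of_fract f of (p, r) \<Rightarrow> poly r 0 \<noteq> 0 \<and> poly p 0 = poly r 0)"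

definition rsubst :: "complex \<Rightarrow> ratfun \<Rightarrow> ratfun" where
  "rsubst c f = (case quot_of_fract f of (p, r) \<Rightarrow>
      quot_to_fract (pcompose p [:0, c:], pcompose r [:0, c:]))"

type_synonym 'i lweight = "'i \<Rightarrow> ratfun"

definition in_Pq :: "'i lweight \<Rightarrow> bool" where
  "in_Pq \<pi> \<longleftrightarrow> (\<forall>i. in_A (\<pi> i))"

text \<open>wt: the homomorphism with wt(omega_{i,a}) = omega_i; on A it is (deg numerator - deg
  denominator) in each component.\<close>
definition wt :: "'i lweight \<Rightarrow> 'i weight" where
  "wt \<pi> = (\<lambda>i. case quot_of_fract (\<pi> i) of (p, r) \<Rightarrow> int (degree p) - int (degree r))"

definition braid_T :: "('i \<Rightarrow> 'i \<Rightarrow> int) \<Rightarrow> ('i \<Rightarrow> nat) \<Rightarrow> complex \<Rightarrow> 'i \<Rightarrow> 'i lweight \<Rightarrow> 'i lweight" where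
  "braid_T A d q i \<pi> = (\<lambda>j.
     if j = i then inverse (rsubst (q ^ (2 * d i)) (\<pi> i))
     else if A j i = -1 then \<pi> j * rsubst (q ^ d i) (\<pi> i)
     else if A j i = -2 then \<pi> j * rsubst (q ^ 3) (\<pi> i) * rsubst q (\<pi> i)
     else if A j i = -3 then \<pi> j * rsubst (q ^ 5) (\<pi> i) * rsubst (q ^ 3) (\<pi> i) * rsubst q (\<pi> i)
     else \<pi> j)"

definition braid_Tw :: "('i \<Rightarrow> 'i \<Rightarrow> int) \<Rightarrow> ('i \<Rightarrow> nat) \<Rightarrow> complex \<Rightarrow> 'i list \<Rightarrow> 'i lweight \<Rightarrow> 'i lweight" where
  "braid_Tw A d q ws = foldr (\<lambda>i f. braid_T A d q i \<circ> f) ws id"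

end

theory Submission
  imports Defs
begin


definition dg :: "ratfun \<Rightarrow> int" where
  "dg f = (case quot_of_fract f of (p, r) \<Rightarrow> int (degree p) - int (degree r))"

lemma Fract_nz: "a \<noteq> 0 \<Longrightarrow> b \<noteq> 0 \<Longrightarrow> Fract a b \<noteq> (0::'a::idom fract)"
  by (simp add: Zero_fract_def eq_fract)

lemma dg_Fract:
  fixes a b :: "complex poly"
  assumes "a \<noteq> 0" "b \<noteq> 0" shows "dg (Fract a b) = int (degree a) - int (degree b)"
proof -
  obtain p r where pr: "quot_of_fract (Fract a b) = (p, r)" by fastforce
  have "Fract p r = Fract a b" using Fract_quot_of_fract[of "Fract a b"] pr by simp
  moreover have r: "r \<noteq> 0" using snd_quot_of_fract_nonzero[of "Fract a b"] pr by simp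
  ultimately have e: "p * b = a * r" using assms eq_fract(1) by blast
  have p: "p \<noteq> 0" using fst_quot_of_fract_eq_0_iff[of "Fract a b"] pr Fract_nz[OF assms] by simp
  have "degree (p * b) = degree (a * r)" using e by simp
  hence "degree p + degree b = degree a + degree r" using p r assms by (simp add: degree_mult_eq)
  thus ?thesis unfolding dg_def pr by simp
qed

lemma fract_repr:
  fixes f :: ratfun assumes "f \<noteq> 0"
  obtains a b where "a \<noteq> 0" "b \<noteq> 0" "f = Fract a b"
proof -
  obtain p r where pr: "quot_of_fract f = (p, r)" by fastforce
  have "Fract p r = f" using Fract_quot_of_fract[of f] pr by simp
  moreover have "r \<noteq> 0" using snd_quot_of_fract_nonzero[of f] pr by simp
  moreover have "p \<noteq> 0" using fst_quot_of_fract_eq_0_iff[of f] pr assms by simp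
  ultimately show ?thesis using that by blast
qed

lemma dg_mult: fixes f g :: ratfun assumes "f \<noteq> 0" "g \<noteq> 0"
  shows "dg (f * g) = dg f + dg g"
proof -
  obtain a b where ab: "a \<noteq> 0" "b \<noteq> 0" "f = Fract a b" using fract_repr[OF assms(1)] by blast
  obtain c e where ce: "c \<noteq> 0" "e \<noteq> 0" "g = Fract c e" using fract_repr[OF assms(2)] by blast
  show ?thesis using ab ce by (simp add: dg_Fract degree_mult_eq)
qed

lemma dg_inverse: fixes f :: ratfun assumes "f \<noteq> 0"
  shows "dg (inverse f) = - dg f" "inverse f \<noteq> 0"
proof -
  obtain a b where ab: "a \<noteq> 0" "b \<noteq> 0" "f = Fract a b" using fract_repr[OF assms(1)] by blast
  show "dg (inverse f) = - dg f" using ab by (simp add: dg_Fract)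
  show "inverse f \<noteq> 0" using assms by simp
qed

lemma rsubst_props: fixes f :: ratfun assumes "f \<noteq> 0" "c \<noteq> 0"
  shows "dg (rsubst c f) = dg f" "rsubst c f \<noteq> 0"
proof -
  obtain p r where pr: "quot_of_fract f = (p, r)" by fastforce
  have r: "r \<noteq> 0" using snd_quot_of_fract_nonzero[of f] pr by simp
  have p: "p \<noteq> 0" using fst_quot_of_fract_eq_0_iff[of f] pr assms by simp
  have dq: "degree [:0, c:] = 1" using assms by simp
  have rs: "rsubst c f = Fract (pcompose p [:0, c:]) (pcompose r [:0, c:])"
    unfolding rsubst_def pr quot_to_fract_def by simp
  have p': "pcompose p [:0, c:] \<noteq> 0" using pcompose_eq_0[of p "[:0,c:]"] p dq by auto
  have r': "pcompose r [:0, c:] \<noteq> 0" using pcompose_eq_0[of r "[:0,c:]"] r dq by auto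
  have "dg f = int (degree p) - int (degree r)" by (simp add: dg_def pr)
  then show "dg (rsubst c f) = dg f" unfolding rs dg_Fract[OF p' r'] using dq
    by (simp add: degree_pcompose)
  show "rsubst c f \<noteq> 0" unfolding rs using p' r' by (rule Fract_nz)
qed

lemma inA_nz: "in_A f \<Longrightarrow> f \<noteq> 0"
  unfolding in_A_def by (cases "quot_of_fract f") (auto)



lemma sum_two:
  fixes g :: "'i::finite \<Rightarrow> 'b::comm_monoid_add"
  assumes "i \<noteq> j" "\<And>k. k \<noteq> i \<Longrightarrow> k \<noteq> j \<Longrightarrow> g k = 0"
  shows "(\<Sum>k\<in>UNIV. g k) = g i + g j"
proof -
  have "(\<Sum>k\<in>UNIV. g k) = (\<Sum>k\<in>{i,j}. g k)"
    by (rule sum.mono_neutral_right) (auto intro: assms(2))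
  thus ?thesis using assms(1) by simp
qed

lemma cartan_prod_lt4:
  fixes A :: "'i::finite \<Rightarrow> 'i \<Rightarrow> int"
  assumes sc: "simple_cartan A d" and ij: "i \<noteq> j"
  shows "A i j * A j i < 4"
proof (rule ccontr)
  assume "\<not> ?thesis"
  hence ge: "A i j * A j i \<ge> 4" by simp
  have Aii: "A i i = 2" "A j j = 2" using sc unfolding simple_cartan_def by auto
  have sym: "int (d i) * A i j = int (d j) * A j i" and dpos: "d i > 0" "d j > 0"
    using sc unfolding simple_cartan_def symmetrizes_def by auto
  have aij: "A i j \<noteq> 0" using ge by auto
  define Di where "Di = real (d i)"
  define Dj where "Dj = real (d j)"
  define a where "a = real_of_int (A i j)"
  define a' where "a' = real_of_int (A j i)"
  have Dpos: "Di > 0" "Dj > 0" using dpos by (auto simp: Di_def Dj_def)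
  have symr: "Di * a = Dj * a'" unfolding Di_def Dj_def a_def a'_def
    using arg_cong[OF sym, of real_of_int] by simp
  have ger: "a * a' \<ge> 4" unfolding a_def a'_def using ge
    by (metis of_int_le_iff of_int_mult of_int_numeral)
  have an: "a \<noteq> 0" using aij by (simp add: a_def)
  define x :: "'i \<Rightarrow> real" where "x = (\<lambda>k. if k = i then 2 * Dj else if k = j then - (Di * a) else 0)"
  have xj: "x j \<noteq> 0" using ij Dpos an by (simp add: x_def)
  have pos: "(\<Sum>k\<in>UNIV. \<Sum>l\<in>UNIV. x k * real (d k) * of_int (A k l) * x l) > 0"
    using sc xj unfolding simple_cartan_def by blast
  have inner: "(\<Sum>l\<in>UNIV. x k * real (d k) * of_int (A k l) * x l)
      = x k * real (d k) * of_int (A k i) * x i + x k * real (d k) * of_int (A k j) * x j" for k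
    by (rule sum_two[OF ij]) (simp add: x_def)
  have "(\<Sum>k\<in>UNIV. \<Sum>l\<in>UNIV. x k * real (d k) * of_int (A k l) * x l)
     = (x i * real (d i) * of_int (A i i) * x i + x i * real (d i) * of_int (A i j) * x j)
      + (x j * real (d j) * of_int (A j i) * x i + x j * real (d j) * of_int (A j j) * x j)"
    unfolding inner by (rule sum_two[OF ij]) (simp add: x_def)
  also have "\<dots> = 2 * Di * (2*Dj)^2 - (2*Dj) * (Di*a) * (Di * a) - (Di*a) * (Dj * a') * (2 * Dj)
      + 2 * Dj * (Di * a)^2"
    using ij by (simp add: x_def Aii Di_def[symmetric] Dj_def[symmetric] a_def[symmetric] a'_def[symmetric] algebra_simps power2_eq_square)
  also have "\<dots> = 2 * Di * Dj * (4 * Dj - Dj * (a * a'))"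
    using symr by (simp add: algebra_simps power2_eq_square)
  also have "\<dots> \<le> 0"
  proof -
    have "Dj * (a * a') \<ge> Dj * 4" using ger Dpos by simp
    hence "4 * Dj - Dj * (a * a') \<le> 0" by simp
    moreover have "2 * Di * Dj > 0" using Dpos by simp
    ultimately show ?thesis by (simp add: mult_pos_neg mult_nonneg_nonpos)
  qed
  finally show False using pos by simp
qed

lemma cartan_pair:
  fixes A :: "'i::finite \<Rightarrow> 'i \<Rightarrow> int"
  assumes sc: "simple_cartan A d" and ij: "i \<noteq> j"
  shows "(A i j = 0 \<and> A j i = 0) \<or> (A i j = -1 \<and> A j i = -1) \<or> (A i j = -1 \<and> A j i = -2)
     \<or> (A i j = -2 \<and> A j i = -1) \<or> (A i j = -1 \<and> A j i = -3) \<or> (A i j = -3 \<and> A j i = -1)"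
proof -
  have p: "A i j * A j i < 4" by (rule cartan_prod_lt4[OF sc ij])
  have n: "A i j \<le> 0" "A j i \<le> 0" "A i j = 0 \<longleftrightarrow> A j i = 0"
    using sc ij unfolding simple_cartan_def by auto
  have b1: "A i j \<ge> -3"
  proof (rule ccontr)
    assume "\<not> ?thesis" hence "A i j \<le> -4" by simp
    moreover have "A j i \<le> -1" using n \<open>A i j \<le> -4\<close> by auto
    ultimately have "(- A i j) * (- A j i) \<ge> 4 * 1"
      by (intro mult_mono) auto
    thus False using p by simp
  qed
  have b2: "A j i \<ge> -3"
  proof (rule ccontr)
    assume "\<not> ?thesis" hence "A j i \<le> -4" by simp
    moreover have "A i j \<le> -1" using n \<open>A j i \<le> -4\<close> by auto
    ultimately have "(- A j i) * (- A i j) \<ge> 4 * 1"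
      by (intro mult_mono) auto
    thus False using p by (simp add: mult.commute)
  qed
  have "A i j \<in> {-3,-2,-1,0}" "A j i \<in> {-3,-2,-1,0}" using b1 b2 n by auto
  thus ?thesis using p n by auto
qed



definition nzw :: "'i lweight \<Rightarrow> bool" where "nzw \<pi> \<longleftrightarrow> (\<forall>i. \<pi> i \<noteq> 0)"

lemma wt_dg: "wt \<pi> i = dg (\<pi> i)" unfolding wt_def dg_def by simp

lemma T_step:
  fixes A :: "'i::finite \<Rightarrow> 'i \<Rightarrow> int"
  assumes sc: "simple_cartan A d" and q: "q \<noteq> 0" and nz: "nzw \<pi>"
  shows "nzw (braid_T A d q i \<pi>) \<and> wt (braid_T A d q i \<pi>) = srefl A i (wt \<pi>)"
proof -
  have Aii: "A i i = 2" using sc unfolding simple_cartan_def by auto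
  have qn: "\<And>n. q ^ n \<noteq> 0" using q by simp
  have pi: "\<pi> i \<noteq> 0" using nz unfolding nzw_def by auto
  have R: "\<And>n. rsubst (q ^ n) (\<pi> i) \<noteq> 0 \<and> dg (rsubst (q ^ n) (\<pi> i)) = dg (\<pi> i)"
    using rsubst_props[OF pi qn] by auto
  have R1: "rsubst q (\<pi> i) \<noteq> 0 \<and> dg (rsubst q (\<pi> i)) = dg (\<pi> i)"
    using rsubst_props[OF pi q] by auto
  have "braid_T A d q i \<pi> j \<noteq> 0 \<and> dg (braid_T A d q i \<pi> j) = srefl A i (wt \<pi>) j" for j
  proof (cases "j = i")
    case True
    thus ?thesis using R[of "2 * d i"] dg_inverse[of "rsubst (q ^ (2 * d i)) (\<pi> i)"]
      by (simp add: braid_T_def srefl_def wt_dg Aii)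
  next
    case False
    have pj: "\<pi> j \<noteq> 0" using nz unfolding nzw_def by auto
    from cartan_pair[OF sc False] have "A j i \<in> {0,-1,-2,-3}" by auto
    thus ?thesis using False R R1 pj
      by (auto simp: braid_T_def srefl_def wt_dg dg_mult)
  qed
  thus ?thesis unfolding nzw_def by (auto simp: wt_dg)
qed

lemma Tw_wt:
  fixes A :: "'i::finite \<Rightarrow> 'i \<Rightarrow> int"
  assumes sc: "simple_cartan A d" and q: "q \<noteq> 0" and nz: "nzw \<pi>"
  shows "nzw (braid_Tw A d q ws \<pi>) \<and> wt (braid_Tw A d q ws \<pi>) = weyl_act A ws (wt \<pi>)"
proof (induction ws)
  case Nil thus ?case using nz by (simp add: braid_Tw_def weyl_act_def)
next
  case (Cons i ws)
  have e1: "braid_Tw A d q (i # ws) \<pi> = braid_T A d q i (braid_Tw A d q ws \<pi>)"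
    by (simp add: braid_Tw_def)
  have e2: "weyl_act A (i # ws) = srefl A i \<circ> weyl_act A ws" by (simp add: weyl_act_def)
  show ?case unfolding e1 e2 using T_step[OF sc q] Cons by simp
qed

lemma inPq_nzw: "in_Pq \<pi> \<Longrightarrow> nzw \<pi>"
  unfolding in_Pq_def nzw_def using inA_nz by blast



definition d2 :: "('i \<Rightarrow> 'i \<Rightarrow> int) \<Rightarrow> bool" where "d2 A \<longleftrightarrow> (\<forall>i. A i i = 2)"

lemma W_Nil[simp]: "weyl_act A [] = id" by (simp add: weyl_act_def)
lemma W_Cons[simp]: "weyl_act A (i # ws) = srefl A i \<circ> weyl_act A ws" by (simp add: weyl_act_def)
lemma W_append: "weyl_act A (xs @ ys) = weyl_act A xs \<circ> weyl_act A ys"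
  by (induction xs) auto

lemma srefl_invol: "A i i = 2 \<Longrightarrow> srefl A i (srefl A i la) = la"
  unfolding srefl_def by (auto simp: algebra_simps)

lemma W_ss: "A i i = 2 \<Longrightarrow> weyl_act A (xs @ [i,i] @ ys) = weyl_act A (xs @ ys)"
  by (auto simp: W_append srefl_invol fun_eq_iff)

lemma W_rev_inv: "d2 A \<Longrightarrow> weyl_act A ws (weyl_act A (rev ws) la) = la"
proof (induction ws arbitrary: la)
  case (Cons x xs) thus ?case by (simp add: W_append srefl_invol d2_def)
qed simp

lemma W_rev_inv2: "d2 A \<Longrightarrow> weyl_act A (rev ws) (weyl_act A ws la) = la"
  using W_rev_inv[of A "rev ws"] by simp

lemma W_rev_cong: assumes "d2 A" "weyl_act A ws = weyl_act A vs"
  shows "weyl_act A (rev ws) = weyl_act A (rev vs)"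
proof
  fix la
  have "weyl_act A (rev ws) la = weyl_act A (rev ws) (weyl_act A vs (weyl_act A (rev vs) la))"
    using W_rev_inv[OF assms(1)] by simp
  also have "\<dots> = weyl_act A (rev vs) la" using W_rev_inv2[OF assms(1), of ws] assms(2) by metis
  finally show "weyl_act A (rev ws) la = weyl_act A (rev vs) la" .
qed

definition len :: "('i \<Rightarrow> 'i \<Rightarrow> int) \<Rightarrow> 'i list \<Rightarrow> nat" where
  "len A ws = (LEAST n. \<exists>vs. length vs = n \<and> weyl_act A vs = weyl_act A ws)"

lemma len_ex: "\<exists>vs. length vs = len A ws \<and> weyl_act A vs = weyl_act A ws"
  unfolding len_def by (rule LeastI_ex) blast

lemma len_min: "weyl_act A vs = weyl_act A ws \<Longrightarrow> len A ws \<le> length vs"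
  unfolding len_def by (rule Least_le) blast

lemma len_le: "len A ws \<le> length ws" by (rule len_min) simp

lemma len_cong: "weyl_act A vs = weyl_act A ws \<Longrightarrow> len A vs = len A ws"
  unfolding len_def by simp

lemma len_append: "len A (xs @ ys) \<le> len A xs + len A ys"
proof -
  obtain a where a: "length a = len A xs" "weyl_act A a = weyl_act A xs" using len_ex by blast
  obtain b where b: "length b = len A ys" "weyl_act A b = weyl_act A ys" using len_ex by blast
  have "weyl_act A (a @ b) = weyl_act A (xs @ ys)" using a b by (simp add: W_append)
  hence "len A (xs @ ys) \<le> length (a @ b)" by (rule len_min)
  thus ?thesis using a b by simp
qed

definition lenI :: "('i \<Rightarrow> 'i \<Rightarrow> int) \<Rightarrow> 'i \<Rightarrow> 'i \<Rightarrow> ('i weight \<Rightarrow> 'i weight) \<Rightarrow> nat" where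
  "lenI A s t f = (LEAST n. \<exists>vs. set vs \<subseteq> {s,t} \<and> length vs = n \<and> weyl_act A vs = f)"

lemma lenI_ex: "set u \<subseteq> {s,t} \<Longrightarrow>
   \<exists>vs. set vs \<subseteq> {s,t} \<and> length vs = lenI A s t (weyl_act A u) \<and> weyl_act A vs = weyl_act A u"
  unfolding lenI_def by (rule LeastI_ex) blast

lemma lenI_min: "set vs \<subseteq> {s,t} \<Longrightarrow> weyl_act A vs = f \<Longrightarrow> lenI A s t f \<le> length vs"
  unfolding lenI_def by (rule Least_le) blast

lemma len_le_lenI: assumes "set u \<subseteq> {s,t}" shows "len A u \<le> lenI A s t (weyl_act A u)"
proof -
  obtain vs where "set vs \<subseteq> {s,t}" "length vs = lenI A s t (weyl_act A u)" "weyl_act A vs = weyl_act A u"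
    using lenI_ex[OF assms] by blast
  thus ?thesis using len_min[of A vs u] by simp
qed

definition cref :: "('i::finite \<Rightarrow> 'i \<Rightarrow> int) \<Rightarrow> 'i \<Rightarrow> ('i \<Rightarrow> int) \<Rightarrow> ('i \<Rightarrow> int)" where
  "cref A i g = (\<lambda>j. if j = i then g j - (\<Sum>k\<in>UNIV. A k i * g k) else g j)"

definition cact :: "('i::finite \<Rightarrow> 'i \<Rightarrow> int) \<Rightarrow> 'i list \<Rightarrow> ('i \<Rightarrow> int) \<Rightarrow> ('i \<Rightarrow> int)" where
  "cact A ws = foldr (\<lambda>i f. cref A i \<circ> f) ws id"

lemma cact_Nil[simp]: "cact A [] = id" by (simp add: cact_def)
lemma cact_Cons[simp]: "cact A (i # ws) = cref A i \<circ> cact A ws" by (simp add: cact_def)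
lemma cact_append: "cact A (xs @ ys) = cact A xs \<circ> cact A ys"
  by (induction xs) auto

definition pair :: "('i::finite) weight \<Rightarrow> ('i \<Rightarrow> int) \<Rightarrow> int" where
  "pair la g = (\<Sum>j\<in>UNIV. la j * g j)"

definition ev :: "'i \<Rightarrow> 'i \<Rightarrow> int" where "ev i = (\<lambda>j. if j = i then 1 else 0)"

lemma pair_srefl_cref:
  fixes A :: "'i::finite \<Rightarrow> 'i \<Rightarrow> int"
  assumes "A i i = 2" shows "pair (srefl A i la) (cref A i g) = pair la g"
proof -
  define c where "c = (\<Sum>k\<in>UNIV. A k i * g k)"
  have cr: "cref A i g = (\<lambda>j. g j - (if j = i then c else 0))"
    unfolding cref_def c_def by auto
  have "pair (srefl A i la) (cref A i g)
     = (\<Sum>j\<in>UNIV. (la j - la i * A j i) * g j - (la j - la i * A j i) * (if j = i then c else 0))"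
    unfolding pair_def srefl_def cr by (simp add: algebra_simps)
  also have "\<dots> = (\<Sum>j\<in>UNIV. (la j - la i * A j i) * g j) - (\<Sum>j\<in>UNIV. (la j - la i * A j i) * (if j = i then c else 0))"
    by (rule sum_subtractf)
  also have "(\<Sum>j\<in>UNIV. (la j - la i * A j i) * g j) = (\<Sum>j\<in>UNIV. la j * g j) - la i * (\<Sum>j\<in>UNIV. A j i * g j)"
    by (simp add: algebra_simps sum_subtractf sum_distrib_left)
  also have "(\<Sum>j\<in>UNIV. (la j - la i * A j i) * (if j = i then c else 0)) = (la i - la i * A i i) * c"
    by (simp add: if_distrib cong: if_cong)
  finally show ?thesis using assms by (simp add: pair_def c_def algebra_simps)
qed

lemma pair_W_cact:
  fixes A :: "'i::finite \<Rightarrow> 'i \<Rightarrow> int"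
  assumes "d2 A" shows "pair (weyl_act A ws la) (cact A ws g) = pair la g"
  using assms by (induction ws) (auto simp: pair_srefl_cref d2_def)

lemma pair_ev: "pair (ev j) g = g j"
proof -
  have "(\<Sum>j'\<in>UNIV. ev j j' * g j') = (\<Sum>j'\<in>UNIV. if j' = j then g j else 0)"
    by (rule sum.cong) (auto simp: ev_def)
  thus ?thesis unfolding pair_def by simp
qed

lemma cact_formula:
  fixes A :: "'i::finite \<Rightarrow> 'i \<Rightarrow> int"
  assumes "d2 A" shows "cact A ws g j = pair (weyl_act A (rev ws) (ev j)) g"
proof -
  have "cact A ws g j = pair (ev j) (cact A ws g)" by (simp add: pair_ev)
  also have "\<dots> = pair (weyl_act A ws (weyl_act A (rev ws) (ev j))) (cact A ws g)"
    using W_rev_inv[OF assms] by simp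
  also have "\<dots> = pair (weyl_act A (rev ws) (ev j)) g" by (rule pair_W_cact[OF assms])
  finally show ?thesis .
qed

lemma cact_cong:
  fixes A :: "'i::finite \<Rightarrow> 'i \<Rightarrow> int"
  assumes "d2 A" "weyl_act A ws = weyl_act A vs" shows "cact A ws = cact A vs"
  by (intro ext) (simp add: cact_formula[OF assms(1)] W_rev_cong[OF assms])

lemma cref_lin: "cref A i (\<lambda>j. a * x j + b * y j) = (\<lambda>j. a * cref A i x j + b * cref A i y j)"
  unfolding cref_def by (auto simp: algebra_simps sum.distrib sum_distrib_left)

lemma cact_lin: "cact A ws (\<lambda>j. a * x j + b * y j) = (\<lambda>j. a * cact A ws x j + b * cact A ws y j)"
  by (induction ws) (auto simp: cref_lin)

lemma cref_ev_self: "A i i = 2 \<Longrightarrow> cref A i (ev i) = (\<lambda>j. - ev i j)"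
  unfolding cref_def ev_def by (auto simp: if_distrib cong: if_cong)

lemma cact_neg: "cact A ws (\<lambda>j. - x j) = (\<lambda>j. - cact A ws x j)"
  using cact_lin[of A ws "-1" x 0 x] by simp



fun altE :: "nat \<Rightarrow> 'i \<Rightarrow> 'i \<Rightarrow> 'i list" where
  "altE 0 x y = []"
| "altE (Suc n) x y = altE n y x @ [x]"

definition comb :: "'i \<Rightarrow> 'i \<Rightarrow> int \<Rightarrow> int \<Rightarrow> 'i \<Rightarrow> int" where
  "comb s t a b = (\<lambda>j. if j = s then a else if j = t then b else 0)"

definition gen :: "('i \<Rightarrow> 'i \<Rightarrow> int) \<Rightarrow> 'i weight \<Rightarrow> 'i \<Rightarrow> 'i \<Rightarrow> int \<Rightarrow> int \<Rightarrow> 'i weight" where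
  "gen A la s t x y = (\<lambda>j. la j - x * A j s - y * A j t)"

lemma gen00: "gen A la s t 0 0 = la" by (simp add: gen_def)

lemma srefl_gen_s: "A s s = 2 \<Longrightarrow>
  srefl A s (gen A la s t x y) = gen A la s t (x + (la s - 2*x - y * A s t)) y"
  by (auto simp: srefl_def gen_def algebra_simps)

lemma srefl_gen_t: "A t t = 2 \<Longrightarrow>
  srefl A t (gen A la s t x y) = gen A la s t x (y + (la t - x * A t s - 2*y))"
  by (auto simp: srefl_def gen_def algebra_simps)

lemma gen_eq: "x = x' \<Longrightarrow> y = y' \<Longrightarrow> gen A la s t x y = gen A la s t x' y'" by simp

lemma sum_comb:
  fixes f :: "'i::finite \<Rightarrow> int"
  assumes "s \<noteq> t" shows "(\<Sum>k\<in>UNIV. f k * comb s t a b k) = f s * a + f t * b"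
  using sum_two[OF assms, of "\<lambda>k. f k * comb s t a b k"] assms by (simp add: comb_def)

lemma cref_comb_s:
  fixes A :: "'i::finite \<Rightarrow> 'i \<Rightarrow> int"
  assumes "s \<noteq> t" "A s s = 2"
  shows "cref A s (comb s t a b) = comb s t (- a - A t s * b) b"
proof -
  have "(\<Sum>k\<in>UNIV. A k s * comb s t a b k) = A s s * a + A t s * b"
    by (rule sum_comb[OF assms(1)])
  thus ?thesis using assms unfolding cref_def by (auto simp: comb_def)
qed

lemma cref_comb_t:
  fixes A :: "'i::finite \<Rightarrow> 'i \<Rightarrow> int"
  assumes "s \<noteq> t" "A t t = 2"
  shows "cref A t (comb s t a b) = comb s t a (- b - A s t * a)"
proof -
  have "(\<Sum>k\<in>UNIV. A k t * comb s t a b k) = A s t * a + A t t * b"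
    by (rule sum_comb[OF assms(1)])
  thus ?thesis using assms unfolding cref_def by (auto simp: comb_def)
qed

lemma ev_comb: "s \<noteq> t \<Longrightarrow> ev s = comb s t 1 0"
  by (auto simp: ev_def comb_def)

lemma braid6:
  fixes A :: "'i::finite \<Rightarrow> 'i \<Rightarrow> int"
  assumes "A s s = 2" "A t t = 2" "A s t = -1" "A t s = -3"
  shows "weyl_act A (altE 6 s t) = weyl_act A (altE 6 t s)"
proof
  fix la
  show "weyl_act A (altE 6 s t) la = weyl_act A (altE 6 t s) la"
    apply (subst (1 2) gen00[where A=A and la=la and s=s and t=t, symmetric])
    apply (simp add: eval_nat_numeral srefl_gen_s srefl_gen_t assms)
    apply (rule gen_eq)
    apply (simp_all add: algebra_simps)
    done
qed



lemma ex_comb_intro: "c = comb s t a b \<Longrightarrow> 0 \<le> a \<Longrightarrow> 0 \<le> b \<Longrightarrow>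
   \<exists>a b. 0 \<le> a \<and> 0 \<le> b \<and> c = comb s t a b" by blast

lemma rk2_case0:
  fixes A :: "'i::finite \<Rightarrow> 'i \<Rightarrow> int"
  assumes "A s s = 2" "A t t = 2" "A s t = 0" "A t s = 0" "s \<noteq> t"
  shows "weyl_act A (altE 2 s t) = weyl_act A (altE 2 t s)"
    "\<forall>r<2. \<exists>a b. 0 \<le> a \<and> 0 \<le> b \<and> cact A (altE r t s) (ev s) = comb s t a b"
proof -
  show "weyl_act A (altE 2 s t) = weyl_act A (altE 2 t s)"
  proof
    fix la
    show "weyl_act A (altE 2 s t) la = weyl_act A (altE 2 t s) la"
      apply (subst (1 2) gen00[where A=A and la=la and s=s and t=t, symmetric])
      apply (simp add: eval_nat_numeral srefl_gen_s srefl_gen_t assms)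
      apply ((rule gen_eq; simp add: algebra_simps)?)
      done
  qed
  show "\<forall>r<2. \<exists>a b. 0 \<le> a \<and> 0 \<le> b \<and> cact A (altE r t s) (ev s) = comb s t a b"
  proof (intro allI impI)
    fix r :: nat assume "r < 2"
    hence "r = 0 \<or> r = 1" by linarith
    moreover
    have "\<exists>a b. 0 \<le> a \<and> 0 \<le> b \<and> cact A (altE 0 t s) (ev s) = comb s t a b"
      by (rule ex_comb_intro) (simp add: ev_comb[OF assms(5)] eval_nat_numeral cact_append cref_comb_s cref_comb_t assms)+
    moreover have "\<exists>a b. 0 \<le> a \<and> 0 \<le> b \<and> cact A (altE 1 t s) (ev s) = comb s t a b"
      by (rule ex_comb_intro) (simp add: ev_comb[OF assms(5)] eval_nat_numeral cact_append cref_comb_s cref_comb_t assms)+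
    ultimately show "\<exists>a b. 0 \<le> a \<and> 0 \<le> b \<and> cact A (altE r t s) (ev s) = comb s t a b"
      by fastforce
  qed
qed

lemma rk2_case1:
  fixes A :: "'i::finite \<Rightarrow> 'i \<Rightarrow> int"
  assumes "A s s = 2" "A t t = 2" "A s t = -1" "A t s = -1" "s \<noteq> t"
  shows "weyl_act A (altE 3 s t) = weyl_act A (altE 3 t s)"
    "\<forall>r<3. \<exists>a b. 0 \<le> a \<and> 0 \<le> b \<and> cact A (altE r t s) (ev s) = comb s t a b"
proof -
  show "weyl_act A (altE 3 s t) = weyl_act A (altE 3 t s)"
  proof
    fix la
    show "weyl_act A (altE 3 s t) la = weyl_act A (altE 3 t s) la"
      apply (subst (1 2) gen00[where A=A and la=la and s=s and t=t, symmetric])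
      apply (simp add: eval_nat_numeral srefl_gen_s srefl_gen_t assms)
      apply ((rule gen_eq; simp add: algebra_simps)?)
      done
  qed
  show "\<forall>r<3. \<exists>a b. 0 \<le> a \<and> 0 \<le> b \<and> cact A (altE r t s) (ev s) = comb s t a b"
  proof (intro allI impI)
    fix r :: nat assume "r < 3"
    hence "r = 0 \<or> r = 1 \<or> r = 2" by linarith
    moreover
    have "\<exists>a b. 0 \<le> a \<and> 0 \<le> b \<and> cact A (altE 0 t s) (ev s) = comb s t a b"
      by (rule ex_comb_intro) (simp add: ev_comb[OF assms(5)] eval_nat_numeral cact_append cref_comb_s cref_comb_t assms)+
    moreover have "\<exists>a b. 0 \<le> a \<and> 0 \<le> b \<and> cact A (altE 1 t s) (ev s) = comb s t a b"
      by (rule ex_comb_intro) (simp add: ev_comb[OF assms(5)] eval_nat_numeral cact_append cref_comb_s cref_comb_t assms)+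
    moreover have "\<exists>a b. 0 \<le> a \<and> 0 \<le> b \<and> cact A (altE 2 t s) (ev s) = comb s t a b"
      by (rule ex_comb_intro) (simp add: ev_comb[OF assms(5)] eval_nat_numeral cact_append cref_comb_s cref_comb_t assms)+
    ultimately show "\<exists>a b. 0 \<le> a \<and> 0 \<le> b \<and> cact A (altE r t s) (ev s) = comb s t a b"
      by fastforce
  qed
qed

lemma rk2_case2:
  fixes A :: "'i::finite \<Rightarrow> 'i \<Rightarrow> int"
  assumes "A s s = 2" "A t t = 2" "A s t = -1" "A t s = -2" "s \<noteq> t"
  shows "weyl_act A (altE 4 s t) = weyl_act A (altE 4 t s)"
    "\<forall>r<4. \<exists>a b. 0 \<le> a \<and> 0 \<le> b \<and> cact A (altE r t s) (ev s) = comb s t a b"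
proof -
  show "weyl_act A (altE 4 s t) = weyl_act A (altE 4 t s)"
  proof
    fix la
    show "weyl_act A (altE 4 s t) la = weyl_act A (altE 4 t s) la"
      apply (subst (1 2) gen00[where A=A and la=la and s=s and t=t, symmetric])
      apply (simp add: eval_nat_numeral srefl_gen_s srefl_gen_t assms)
      apply ((rule gen_eq; simp add: algebra_simps)?)
      done
  qed
  show "\<forall>r<4. \<exists>a b. 0 \<le> a \<and> 0 \<le> b \<and> cact A (altE r t s) (ev s) = comb s t a b"
  proof (intro allI impI)
    fix r :: nat assume "r < 4"
    hence "r = 0 \<or> r = 1 \<or> r = 2 \<or> r = 3" by linarith
    moreover
    have "\<exists>a b. 0 \<le> a \<and> 0 \<le> b \<and> cact A (altE 0 t s) (ev s) = comb s t a b"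
      by (rule ex_comb_intro) (simp add: ev_comb[OF assms(5)] eval_nat_numeral cact_append cref_comb_s cref_comb_t assms)+
    moreover have "\<exists>a b. 0 \<le> a \<and> 0 \<le> b \<and> cact A (altE 1 t s) (ev s) = comb s t a b"
      by (rule ex_comb_intro) (simp add: ev_comb[OF assms(5)] eval_nat_numeral cact_append cref_comb_s cref_comb_t assms)+
    moreover have "\<exists>a b. 0 \<le> a \<and> 0 \<le> b \<and> cact A (altE 2 t s) (ev s) = comb s t a b"
      by (rule ex_comb_intro) (simp add: ev_comb[OF assms(5)] eval_nat_numeral cact_append cref_comb_s cref_comb_t assms)+
    moreover have "\<exists>a b. 0 \<le> a \<and> 0 \<le> b \<and> cact A (altE 3 t s) (ev s) = comb s t a b"
      by (rule ex_comb_intro) (simp add: ev_comb[OF assms(5)] eval_nat_numeral cact_append cref_comb_s cref_comb_t assms)+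
    ultimately show "\<exists>a b. 0 \<le> a \<and> 0 \<le> b \<and> cact A (altE r t s) (ev s) = comb s t a b"
      by fastforce
  qed
qed

lemma rk2_case3:
  fixes A :: "'i::finite \<Rightarrow> 'i \<Rightarrow> int"
  assumes "A s s = 2" "A t t = 2" "A s t = -2" "A t s = -1" "s \<noteq> t"
  shows "weyl_act A (altE 4 s t) = weyl_act A (altE 4 t s)"
    "\<forall>r<4. \<exists>a b. 0 \<le> a \<and> 0 \<le> b \<and> cact A (altE r t s) (ev s) = comb s t a b"
proof -
  show "weyl_act A (altE 4 s t) = weyl_act A (altE 4 t s)"
  proof
    fix la
    show "weyl_act A (altE 4 s t) la = weyl_act A (altE 4 t s) la"
      apply (subst (1 2) gen00[where A=A and la=la and s=s and t=t, symmetric])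
      apply (simp add: eval_nat_numeral srefl_gen_s srefl_gen_t assms)
      apply ((rule gen_eq; simp add: algebra_simps)?)
      done
  qed
  show "\<forall>r<4. \<exists>a b. 0 \<le> a \<and> 0 \<le> b \<and> cact A (altE r t s) (ev s) = comb s t a b"
  proof (intro allI impI)
    fix r :: nat assume "r < 4"
    hence "r = 0 \<or> r = 1 \<or> r = 2 \<or> r = 3" by linarith
    moreover
    have "\<exists>a b. 0 \<le> a \<and> 0 \<le> b \<and> cact A (altE 0 t s) (ev s) = comb s t a b"
      by (rule ex_comb_intro) (simp add: ev_comb[OF assms(5)] eval_nat_numeral cact_append cref_comb_s cref_comb_t assms)+
    moreover have "\<exists>a b. 0 \<le> a \<and> 0 \<le> b \<and> cact A (altE 1 t s) (ev s) = comb s t a b"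
      by (rule ex_comb_intro) (simp add: ev_comb[OF assms(5)] eval_nat_numeral cact_append cref_comb_s cref_comb_t assms)+
    moreover have "\<exists>a b. 0 \<le> a \<and> 0 \<le> b \<and> cact A (altE 2 t s) (ev s) = comb s t a b"
      by (rule ex_comb_intro) (simp add: ev_comb[OF assms(5)] eval_nat_numeral cact_append cref_comb_s cref_comb_t assms)+
    moreover have "\<exists>a b. 0 \<le> a \<and> 0 \<le> b \<and> cact A (altE 3 t s) (ev s) = comb s t a b"
      by (rule ex_comb_intro) (simp add: ev_comb[OF assms(5)] eval_nat_numeral cact_append cref_comb_s cref_comb_t assms)+
    ultimately show "\<exists>a b. 0 \<le> a \<and> 0 \<le> b \<and> cact A (altE r t s) (ev s) = comb s t a b"
      by fastforce
  qed
qed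

lemma rk2_case4:
  fixes A :: "'i::finite \<Rightarrow> 'i \<Rightarrow> int"
  assumes "A s s = 2" "A t t = 2" "A s t = -1" "A t s = -3" "s \<noteq> t"
  shows "weyl_act A (altE 6 s t) = weyl_act A (altE 6 t s)"
    "\<forall>r<6. \<exists>a b. 0 \<le> a \<and> 0 \<le> b \<and> cact A (altE r t s) (ev s) = comb s t a b"
proof -
  show "weyl_act A (altE 6 s t) = weyl_act A (altE 6 t s)"
  proof
    fix la
    show "weyl_act A (altE 6 s t) la = weyl_act A (altE 6 t s) la"
      apply (subst (1 2) gen00[where A=A and la=la and s=s and t=t, symmetric])
      apply (simp add: eval_nat_numeral srefl_gen_s srefl_gen_t assms)
      apply ((rule gen_eq; simp add: algebra_simps)?)
      done
  qed
  show "\<forall>r<6. \<exists>a b. 0 \<le> a \<and> 0 \<le> b \<and> cact A (altE r t s) (ev s) = comb s t a b"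
  proof (intro allI impI)
    fix r :: nat assume "r < 6"
    hence "r = 0 \<or> r = 1 \<or> r = 2 \<or> r = 3 \<or> r = 4 \<or> r = 5" by linarith
    moreover
    have "\<exists>a b. 0 \<le> a \<and> 0 \<le> b \<and> cact A (altE 0 t s) (ev s) = comb s t a b"
      by (rule ex_comb_intro) (simp add: ev_comb[OF assms(5)] eval_nat_numeral cact_append cref_comb_s cref_comb_t assms)+
    moreover have "\<exists>a b. 0 \<le> a \<and> 0 \<le> b \<and> cact A (altE 1 t s) (ev s) = comb s t a b"
      by (rule ex_comb_intro) (simp add: ev_comb[OF assms(5)] eval_nat_numeral cact_append cref_comb_s cref_comb_t assms)+
    moreover have "\<exists>a b. 0 \<le> a \<and> 0 \<le> b \<and> cact A (altE 2 t s) (ev s) = comb s t a b"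
      by (rule ex_comb_intro) (simp add: ev_comb[OF assms(5)] eval_nat_numeral cact_append cref_comb_s cref_comb_t assms)+
    moreover have "\<exists>a b. 0 \<le> a \<and> 0 \<le> b \<and> cact A (altE 3 t s) (ev s) = comb s t a b"
      by (rule ex_comb_intro) (simp add: ev_comb[OF assms(5)] eval_nat_numeral cact_append cref_comb_s cref_comb_t assms)+
    moreover have "\<exists>a b. 0 \<le> a \<and> 0 \<le> b \<and> cact A (altE 4 t s) (ev s) = comb s t a b"
      by (rule ex_comb_intro) (simp add: ev_comb[OF assms(5)] eval_nat_numeral cact_append cref_comb_s cref_comb_t assms)+
    moreover have "\<exists>a b. 0 \<le> a \<and> 0 \<le> b \<and> cact A (altE 5 t s) (ev s) = comb s t a b"
      by (rule ex_comb_intro) (simp add: ev_comb[OF assms(5)] eval_nat_numeral cact_append cref_comb_s cref_comb_t assms)+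
    ultimately show "\<exists>a b. 0 \<le> a \<and> 0 \<le> b \<and> cact A (altE r t s) (ev s) = comb s t a b"
      by fastforce
  qed
qed

lemma rk2_case5:
  fixes A :: "'i::finite \<Rightarrow> 'i \<Rightarrow> int"
  assumes "A s s = 2" "A t t = 2" "A s t = -3" "A t s = -1" "s \<noteq> t"
  shows "weyl_act A (altE 6 s t) = weyl_act A (altE 6 t s)"
    "\<forall>r<6. \<exists>a b. 0 \<le> a \<and> 0 \<le> b \<and> cact A (altE r t s) (ev s) = comb s t a b"
proof -
  show "weyl_act A (altE 6 s t) = weyl_act A (altE 6 t s)"
  proof
    fix la
    show "weyl_act A (altE 6 s t) la = weyl_act A (altE 6 t s) la"
      apply (subst (1 2) gen00[where A=A and la=la and s=s and t=t, symmetric])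
      apply (simp add: eval_nat_numeral srefl_gen_s srefl_gen_t assms)
      apply ((rule gen_eq; simp add: algebra_simps)?)
      done
  qed
  show "\<forall>r<6. \<exists>a b. 0 \<le> a \<and> 0 \<le> b \<and> cact A (altE r t s) (ev s) = comb s t a b"
  proof (intro allI impI)
    fix r :: nat assume "r < 6"
    hence "r = 0 \<or> r = 1 \<or> r = 2 \<or> r = 3 \<or> r = 4 \<or> r = 5" by linarith
    moreover
    have "\<exists>a b. 0 \<le> a \<and> 0 \<le> b \<and> cact A (altE 0 t s) (ev s) = comb s t a b"
      by (rule ex_comb_intro) (simp add: ev_comb[OF assms(5)] eval_nat_numeral cact_append cref_comb_s cref_comb_t assms)+
    moreover have "\<exists>a b. 0 \<le> a \<and> 0 \<le> b \<and> cact A (altE 1 t s) (ev s) = comb s t a b"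
      by (rule ex_comb_intro) (simp add: ev_comb[OF assms(5)] eval_nat_numeral cact_append cref_comb_s cref_comb_t assms)+
    moreover have "\<exists>a b. 0 \<le> a \<and> 0 \<le> b \<and> cact A (altE 2 t s) (ev s) = comb s t a b"
      by (rule ex_comb_intro) (simp add: ev_comb[OF assms(5)] eval_nat_numeral cact_append cref_comb_s cref_comb_t assms)+
    moreover have "\<exists>a b. 0 \<le> a \<and> 0 \<le> b \<and> cact A (altE 3 t s) (ev s) = comb s t a b"
      by (rule ex_comb_intro) (simp add: ev_comb[OF assms(5)] eval_nat_numeral cact_append cref_comb_s cref_comb_t assms)+
    moreover have "\<exists>a b. 0 \<le> a \<and> 0 \<le> b \<and> cact A (altE 4 t s) (ev s) = comb s t a b"
      by (rule ex_comb_intro) (simp add: ev_comb[OF assms(5)] eval_nat_numeral cact_append cref_comb_s cref_comb_t assms)+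
    moreover have "\<exists>a b. 0 \<le> a \<and> 0 \<le> b \<and> cact A (altE 5 t s) (ev s) = comb s t a b"
      by (rule ex_comb_intro) (simp add: ev_comb[OF assms(5)] eval_nat_numeral cact_append cref_comb_s cref_comb_t assms)+
    ultimately show "\<exists>a b. 0 \<le> a \<and> 0 \<le> b \<and> cact A (altE r t s) (ev s) = comb s t a b"
      by fastforce
  qed
qed



lemma sc_d2: "simple_cartan A d \<Longrightarrow> d2 A"
  unfolding simple_cartan_def d2_def by auto

lemma altE_set: "set (altE n x y) \<subseteq> {x,y}"
  by (induction n arbitrary: x y) auto

lemma altE_length[simp]: "length (altE n x y) = n"
  by (induction n arbitrary: x y) auto

lemma altE_suffix: "\<exists>P. set P \<subseteq> {x,y} \<and> altE (n + m) x y = P @ altE m x y"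
proof (induction m arbitrary: x y)
  case 0 thus ?case using altE_set[of n x y] by auto
next
  case (Suc m)
  obtain P where P: "set P \<subseteq> {y,x}" "altE (n + m) y x = P @ altE m y x" using Suc[of y x] by blast
  have "altE (n + Suc m) x y = P @ altE (Suc m) x y" using P(2) by simp
  thus ?case using P(1) by blast
qed

definition noadj :: "'i list \<Rightarrow> bool" where
  "noadj u \<longleftrightarrow> \<not> (\<exists>a b z. u = a @ [z,z] @ b)"

lemma alt_shape:
  "x \<noteq> y \<Longrightarrow> set u \<subseteq> {x,y} \<Longrightarrow> noadj u \<Longrightarrow> u \<noteq> [] \<Longrightarrow> last u = x \<Longrightarrow> u = altE (length u) x y"
proof (induction u arbitrary: x y rule: rev_induct)
  case Nil thus ?case by simp
next
  case (snoc z u0)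
  have zx: "z = x" using snoc.prems by simp
  show ?case
  proof (cases "u0 = []")
    case True thus ?thesis using zx by simp
  next
    case False
    have lu0: "last u0 \<in> {x,y}" using snoc.prems(2) False last_in_set by fastforce
    have "last u0 \<noteq> x"
    proof
      assume "last u0 = x"
      hence "u0 @ [z] = butlast u0 @ [x,x] @ []" using False zx by (metis append.assoc append_Cons append_Nil append_butlast_last_id append_Nil2)
      thus False using snoc.prems(3) unfolding noadj_def by blast
    qed
    hence ly: "last u0 = y" using lu0 by auto
    have na: "noadj u0"
      unfolding noadj_def
    proof
      assume "\<exists>a b z'. u0 = a @ [z',z'] @ b"
      then obtain a b z' where "u0 = a @ [z',z'] @ b" by blast
      hence "u0 @ [z] = a @ [z',z'] @ (b @ [z])" by simp
      thus False using snoc.prems(3) unfolding noadj_def by blast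
    qed
    have "u0 = altE (length u0) y x"
      using snoc.IH[of y x] snoc.prems(1,2) na False ly by auto
    thus ?thesis using zx by simp
  qed
qed

lemma R2gen:
  fixes A :: "'i::finite \<Rightarrow> 'i \<Rightarrow> int"
  assumes d2: "d2 A" and st: "s \<noteq> t" and m: "0 < m"
    and br: "weyl_act A (altE m s t) = weyl_act A (altE m t s)"
    and pos: "\<forall>r<m. \<exists>a b. 0 \<le> a \<and> 0 \<le> b \<and> cact A (altE r t s) (ev s) = comb s t a b"
    and u: "set u \<subseteq> {s,t}"
    and nl: "\<not> lenI A s t (weyl_act A (u @ [s])) < lenI A s t (weyl_act A u)"
  shows "\<exists>a b. 0 \<le> a \<and> 0 \<le> b \<and> cact A u (ev s) = comb s t a b"
proof -
  obtain u' where u': "set u' \<subseteq> {s,t}" "length u' = lenI A s t (weyl_act A u)"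
      "weyl_act A u' = weyl_act A u"
    using lenI_ex[OF u] by blast
  define r where "r = length u'"
  have Wus: "weyl_act A (u @ [s]) = weyl_act A (u' @ [s])" using u'(3) by (simp add: W_append)
  have short: False if "set v \<subseteq> {s,t}" "weyl_act A v = weyl_act A (u' @ [s])" "length v < r" for v
  proof -
    have "lenI A s t (weyl_act A (u' @ [s])) \<le> length v" by (rule lenI_min[OF that(1) that(2)])
    thus False using nl Wus u'(2) that(3) r_def by simp
  qed
  have dd: "\<And>z. A z z = 2" using d2 unfolding d2_def by auto
  have nad: "noadj u'"
    unfolding noadj_def
  proof
    assume "\<exists>a b z. u' = a @ [z,z] @ b"
    then obtain a b z where ab: "u' = a @ [z,z] @ b" by blast
    have "weyl_act A (a @ [z,z] @ b) = weyl_act A (a @ b)" by (rule W_ss, rule dd)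
    hence "weyl_act A (a @ b) = weyl_act A u" using ab u'(3) by simp
    moreover have "set (a @ b) \<subseteq> {s,t}" using ab u'(1) by auto
    ultimately have "lenI A s t (weyl_act A u) \<le> length (a @ b)" by (intro lenI_min)
    thus False using u'(2) ab by simp
  qed
  have shape: "u' = altE r t s"
  proof (cases "u' = []")
    case True thus ?thesis by (simp add: r_def)
  next
    case False
    have ll: "last u' \<in> {s,t}" using u'(1) False last_in_set by fastforce
    have "last u' \<noteq> s"
    proof
      assume ls: "last u' = s"
      have ue: "u' = butlast u' @ [s]" using ls False append_butlast_last_id by metis
      have "weyl_act A (butlast u' @ [s,s] @ []) = weyl_act A (butlast u' @ [])" by (rule W_ss, rule dd)
      hence "weyl_act A (butlast u') = weyl_act A (u' @ [s])"
        by (subst ue) simp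
      moreover have "set (butlast u') \<subseteq> {s,t}" using u'(1) in_set_butlastD by fastforce
      moreover have "length (butlast u') < r" using False r_def by simp
      ultimately show False using short[of "butlast u'"] by blast
    qed
    hence "last u' = t" using ll by auto
    thus ?thesis using alt_shape[of t s u'] st u'(1) nad False r_def by auto
  qed
  have rm: "r < m"
  proof (rule ccontr)
    assume "\<not> r < m"
    hence rr: "(r - m) + m = r" by simp
    obtain P where P: "set P \<subseteq> {t,s}" "altE r t s = P @ altE m t s"
      using altE_suffix[of t s "r - m" m] rr by auto
    obtain m' where m': "m = Suc m'" using m by (cases m) auto
    have "weyl_act A (u' @ [s]) = weyl_act A P \<circ> weyl_act A (altE m t s) \<circ> srefl A s"
      using shape P(2) by (simp add: W_append comp_assoc)
    also have "\<dots> = weyl_act A P \<circ> weyl_act A (altE m s t) \<circ> srefl A s" using br by simp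
    also have "\<dots> = weyl_act A ((P @ altE m' t s) @ [s, s] @ [])" using m' by (simp add: W_append fun_eq_iff)
    also have "\<dots> = weyl_act A ((P @ altE m' t s) @ [])" by (rule W_ss, rule dd)
    finally have "weyl_act A (P @ altE m' t s) = weyl_act A (u' @ [s])" by simp
    moreover have "set (P @ altE m' t s) \<subseteq> {s,t}" using P(1) altE_set[of m' t s] by auto
    moreover have "length (P @ altE m' t s) < r"
      using arg_cong[OF P(2), of length] m' by simp
    ultimately show False using short[of "P @ altE m' t s"] by blast
  qed
  have "cact A u (ev s) = cact A (altE r t s) (ev s)"
    using cact_cong[OF d2 u'(3)] shape by simp
  thus ?thesis using pos rm by simp
qed

lemma R2:
  fixes A :: "'i::finite \<Rightarrow> 'i \<Rightarrow> int"
  assumes sc: "simple_cartan A d" and st: "s \<noteq> t"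
    and u: "set u \<subseteq> {s,t}"
    and nl: "\<not> lenI A s t (weyl_act A (u @ [s])) < lenI A s t (weyl_act A u)"
  shows "\<exists>a b. 0 \<le> a \<and> 0 \<le> b \<and> cact A u (ev s) = comb s t a b"
proof -
  have d2: "d2 A" by (rule sc_d2[OF sc])
  have dd: "A s s = 2" "A t t = 2" using d2 unfolding d2_def by auto
  note G = R2gen[OF d2 st _ _ _ u nl]
  from cartan_pair[OF sc st] show ?thesis
  proof (elim disjE conjE)
    assume "A s t = 0" "A t s = 0"
    note c = rk2_case0[OF dd this st]
    show ?thesis by (rule G[OF _ c(1) c(2)]) simp
  next
    assume "A s t = -1" "A t s = -1"
    note c = rk2_case1[OF dd this st]
    show ?thesis by (rule G[OF _ c(1) c(2)]) simp
  next
    assume "A s t = -1" "A t s = -2"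
    note c = rk2_case2[OF dd this st]
    show ?thesis by (rule G[OF _ c(1) c(2)]) simp
  next
    assume "A s t = -2" "A t s = -1"
    note c = rk2_case3[OF dd this st]
    show ?thesis by (rule G[OF _ c(1) c(2)]) simp
  next
    assume "A s t = -1" "A t s = -3"
    note c = rk2_case4[OF dd this st]
    show ?thesis by (rule G[OF _ c(1) c(2)]) simp
  next
    assume "A s t = -3" "A t s = -1"
    note c = rk2_case5[OF dd this st]
    show ?thesis by (rule G[OF _ c(1) c(2)]) simp
  qed
qed



definition nonneg :: "('i \<Rightarrow> int) \<Rightarrow> bool" where "nonneg g \<longleftrightarrow> (\<forall>j. 0 \<le> g j)"

lemma comb_ev: "s \<noteq> t \<Longrightarrow> comb s t a b = (\<lambda>j. a * ev s j + b * ev t j)"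
  by (auto simp: comb_def ev_def)

lemma lenI_Cons: assumes "set u \<subseteq> {s,t}" "x \<in> {s,t}"
  shows "lenI A s t (weyl_act A (x # u)) \<le> lenI A s t (weyl_act A u) + 1"
proof -
  obtain u' where u': "set u' \<subseteq> {s,t}" "length u' = lenI A s t (weyl_act A u)"
      "weyl_act A u' = weyl_act A u"
    using lenI_ex[OF assms(1)] by blast
  have "set (x # u') \<subseteq> {s,t}" using u'(1) assms(2) by auto
  moreover have "weyl_act A (x # u') = weyl_act A (x # u)" using u'(3) by simp
  ultimately have "lenI A s t (weyl_act A (x # u)) \<le> length (x # u')" by (rule lenI_min)
  thus ?thesis using u'(2) by simp
qed

lemma KT:
  fixes A :: "'i::finite \<Rightarrow> 'i \<Rightarrow> int"
  assumes sc: "simple_cartan A d"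
  shows "len A ws = n \<Longrightarrow> \<not> len A (ws @ [s]) < len A ws \<Longrightarrow> nonneg (cact A ws (ev s))"
proof (induction n arbitrary: ws s rule: less_induct)
  case (less n ws s)
  have d2: "d2 A" by (rule sc_d2[OF sc])
  have dd: "\<And>z. A z z = 2" using d2 unfolding d2_def by auto
  obtain wr where wr: "length wr = len A ws" "weyl_act A wr = weyl_act A ws" using len_ex by blast
  show ?case
  proof (cases "wr = []")
    case True
    hence "weyl_act A ws = weyl_act A []" using wr by simp
    hence "cact A ws = cact A []" by (rule cact_cong[OF d2])
    thus ?thesis by (simp add: nonneg_def ev_def)
  next
    case False
    then obtain w0 t where w0: "wr = w0 @ [t]" by (metis rev_exhaust)
    have n: "n = length w0 + 1" using wr(1) w0 less.prems(1) by simp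
    have lw0: "len A w0 < n" using len_le[of A w0] n by simp
    have Wws: "weyl_act A ws = weyl_act A (w0 @ [t])" using wr w0 by simp
    have st: "s \<noteq> t"
    proof
      assume "s = t"
      have "weyl_act A (ws @ [s]) = weyl_act A (w0 @ [t,t] @ [])" using Wws \<open>s = t\<close> by (simp add: W_append comp_assoc)
      also have "\<dots> = weyl_act A (w0 @ [])" by (rule W_ss, rule dd)
      finally have "len A (ws @ [s]) = len A w0" using len_cong by (metis append_Nil2)
      thus False using lw0 less.prems by simp
    qed
    define C where "C = {v. \<exists>u. set u \<subseteq> {s,t} \<and> weyl_act A ws = weyl_act A (v @ u)
                               \<and> len A v + lenI A s t (weyl_act A u) \<le> n}"
    have "w0 \<in> C"
    proof -
      have "lenI A s t (weyl_act A [t]) \<le> length [t]" by (rule lenI_min) auto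
      hence "len A w0 + lenI A s t (weyl_act A [t]) \<le> n" using len_le[of A w0] n by simp
      thus ?thesis unfolding C_def using Wws by (intro CollectI exI[of _ "[t]"]) auto
    qed
    then obtain v where v: "v \<in> C" and vmin: "\<And>v'. v' \<in> C \<Longrightarrow> len A v \<le> len A v'"
      using ex_has_least_nat[of "\<lambda>v. v \<in> C" w0 "len A"] by blast
    from v obtain u where u: "set u \<subseteq> {s,t}" "weyl_act A ws = weyl_act A (v @ u)"
        "len A v + lenI A s t (weyl_act A u) \<le> n" unfolding C_def by blast
    have lv: "len A v < n" using vmin[OF \<open>w0 \<in> C\<close>] lw0 by simp
    have nd: "\<not> len A (v @ [x]) < len A v" if x: "x \<in> {s,t}" for x
    proof
      assume lt: "len A (v @ [x]) < len A v"
      have "weyl_act A ((v @ [x]) @ (x # u)) = weyl_act A (v @ [x,x] @ u)" by simp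
      also have "\<dots> = weyl_act A (v @ u)" by (rule W_ss, rule dd)
      finally have e: "weyl_act A ws = weyl_act A ((v @ [x]) @ (x # u))" using u(2) by simp
      have "set (x # u) \<subseteq> {s,t}" using u(1) x by auto
      moreover have "len A (v @ [x]) + lenI A s t (weyl_act A (x # u)) \<le> n"
        using lenI_Cons[OF u(1) x, of A] lt u(3) by linarith
      ultimately have "v @ [x] \<in> C" unfolding C_def using e by blast
      hence "len A v \<le> len A (v @ [x])" by (rule vmin)
      thus False using lt by simp
    qed
    have IHs: "nonneg (cact A v (ev s))" using less.IH[OF lv refl nd[of s]] by simp
    have IHt: "nonneg (cact A v (ev t))" using less.IH[OF lv refl nd[of t]] by simp
    have nlI: "\<not> lenI A s t (weyl_act A (u @ [s])) < lenI A s t (weyl_act A u)"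
    proof
      assume lt: "lenI A s t (weyl_act A (u @ [s])) < lenI A s t (weyl_act A u)"
      have "weyl_act A (ws @ [s]) = weyl_act A (v @ (u @ [s]))" using u(2) by (simp add: W_append comp_assoc)
      hence "len A (ws @ [s]) = len A (v @ (u @ [s]))" by (rule len_cong)
      also have "\<dots> \<le> len A v + len A (u @ [s])" by (rule len_append)
      also have "len A (u @ [s]) \<le> lenI A s t (weyl_act A (u @ [s]))"
        by (rule len_le_lenI) (use u(1) in auto)
      finally have "len A (ws @ [s]) < n" using lt u(3) by linarith
      thus False using less.prems by simp
    qed
    obtain a b where ab: "0 \<le> a" "0 \<le> b" "cact A u (ev s) = comb s t a b"
      using R2[OF sc st u(1) nlI] by blast
    have "cact A ws = cact A (v @ u)" by (rule cact_cong[OF d2 u(2)])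
    hence "cact A ws (ev s) = cact A v (comb s t a b)" using ab(3) by (simp add: cact_append)
    also have "\<dots> = (\<lambda>j. a * cact A v (ev s) j + b * cact A v (ev t) j)"
      by (simp add: comb_ev[OF st] cact_lin)
    finally show ?thesis using IHs IHt ab(1,2) unfolding nonneg_def by simp
  qed
qed

lemma KT_neg:
  fixes A :: "'i::finite \<Rightarrow> 'i \<Rightarrow> int"
  assumes sc: "simple_cartan A d" and lt: "len A (ws @ [s]) < len A ws"
  shows "cact A ws (ev s) j \<le> 0"
proof -
  have d2: "d2 A" by (rule sc_d2[OF sc])
  have dd: "\<And>z. A z z = 2" using d2 unfolding d2_def by auto
  have "weyl_act A (ws @ [s,s] @ []) = weyl_act A (ws @ [])" by (rule W_ss, rule dd)
  hence "len A ((ws @ [s]) @ [s]) = len A ws" using len_cong by simp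
  hence "\<not> len A ((ws @ [s]) @ [s]) < len A (ws @ [s])" using lt by simp
  hence "nonneg (cact A (ws @ [s]) (ev s))" using KT[OF sc refl] by blast
  moreover have "cact A (ws @ [s]) (ev s) = (\<lambda>j. - cact A ws (ev s) j)"
    using dd by (simp add: cact_append cref_ev_self cact_neg)
  ultimately show ?thesis unfolding nonneg_def by (metis neg_0_le_iff_le)
qed

lemma pair_ev2: "pair la (ev i) = la i"
proof -
  have "(\<Sum>j\<in>UNIV. la j * ev i j) = (\<Sum>j\<in>UNIV. if j = i then la i else 0)"
    by (rule sum.cong) (auto simp: ev_def)
  thus ?thesis unfolding pair_def by simp
qed

lemma dom_stab:
  fixes A :: "'i::finite \<Rightarrow> 'i \<Rightarrow> int"
  assumes sc: "simple_cartan A d"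
  shows "length ws = len A ws \<Longrightarrow> dominant la \<Longrightarrow> dominant (weyl_act A ws la) \<Longrightarrow>
     weyl_act A ws la = la \<and> (\<exists>vs. set vs \<subseteq> {i. la i = 0} \<and> weyl_act A vs = weyl_act A ws)"
proof (induction ws rule: rev_induct)
  case Nil thus ?case by (intro conjI exI[of _ "[]"]) auto
next
  case (snoc i w0)
  have d2: "d2 A" by (rule sc_d2[OF sc])
  have dd: "\<And>z. A z z = 2" using d2 unfolding d2_def by auto
  have lw0: "length w0 = len A w0"
  proof (rule ccontr)
    assume "length w0 \<noteq> len A w0"
    hence "len A w0 < length w0" using len_le[of A w0] by simp
    obtain r0 where r0: "length r0 = len A w0" "weyl_act A r0 = weyl_act A w0" using len_ex by blast
    have "weyl_act A (r0 @ [i]) = weyl_act A (w0 @ [i])" using r0(2) by (simp add: W_append)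
    hence "len A (w0 @ [i]) \<le> length (r0 @ [i])" by (rule len_min)
    thus False using snoc.prems(1) r0(1) \<open>len A w0 < length w0\<close> by simp
  qed
  have "weyl_act A ((w0 @ [i]) @ [i]) = weyl_act A (w0 @ [i,i] @ [])" by simp
  also have "\<dots> = weyl_act A (w0 @ [])" by (rule W_ss, rule dd)
  finally have "len A ((w0 @ [i]) @ [i]) = len A w0" using len_cong by (metis append_Nil2)
  hence lt: "len A ((w0 @ [i]) @ [i]) < len A (w0 @ [i])" using lw0 snoc.prems(1) by simp
  define c where "c = cact A (w0 @ [i]) (ev i)"
  have cn: "\<And>j. c j \<le> 0" unfolding c_def by (rule KT_neg[OF sc lt])
  have "la i = pair la (ev i)" by (simp add: pair_ev2)
  also have "\<dots> = pair (weyl_act A (w0 @ [i]) la) c" unfolding c_def by (rule pair_W_cact[OF d2, symmetric])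
  also have "\<dots> \<le> 0" unfolding pair_def
    using snoc.prems(3) cn by (auto intro!: sum_nonpos mult_nonneg_nonpos simp: dominant_def)
  finally have "la i \<le> 0" .
  hence li: "la i = 0" using snoc.prems(2) unfolding dominant_def by (metis order.antisym)
  have sl: "srefl A i la = la" unfolding srefl_def li by simp
  have e: "weyl_act A (w0 @ [i]) la = weyl_act A w0 la" by (simp add: W_append sl)
  have IH: "weyl_act A w0 la = la \<and> (\<exists>vs. set vs \<subseteq> {i. la i = 0} \<and> weyl_act A vs = weyl_act A w0)"
    using snoc.IH[OF lw0 snoc.prems(2)] snoc.prems(3) e by simp
  then obtain vs where vs: "set vs \<subseteq> {i. la i = 0}" "weyl_act A vs = weyl_act A w0" by blast
  have "set (vs @ [i]) \<subseteq> {i. la i = 0}" using vs(1) li by auto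
  moreover have "weyl_act A (vs @ [i]) = weyl_act A (w0 @ [i])" using vs(2) by (simp add: W_append)
  ultimately have "\<exists>vs'. set vs' \<subseteq> {i. la i = 0} \<and> weyl_act A vs' = weyl_act A (w0 @ [i])" by blast
  thus ?case using IH e by simp
qed


theorem lemma2p5:
  fixes A :: "'i::finite \<Rightarrow> 'i \<Rightarrow> int" and d :: "'i \<Rightarrow> nat" and q :: complex
  assumes "simple_cartan A d"
    and "q \<noteq> 0" and "\<forall>n::nat. n > 0 \<longrightarrow> q ^ n \<noteq> 1"
  shows "(\<forall>ws \<pi>. reduced_word A ws \<and> in_Pq \<pi> \<longrightarrow>
            wt (braid_Tw A d q ws \<pi>) = weyl_act A ws (wt \<pi>))
       \<and> (\<forall>\<pi>1 \<pi>2 ws1 ws2. in_Pq \<pi>1 \<and> in_Pq \<pi>2 \<and> dominant (wt \<pi>1) \<and> dominant (wt \<pi>2)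
            \<and> reduced_word A ws1 \<and> reduced_word A ws2
            \<and> braid_Tw A d q ws1 \<pi>1 = braid_Tw A d q ws2 \<pi>2 \<longrightarrow>
              wt \<pi>1 = wt \<pi>2 \<and> in_stab_subgroup A (wt \<pi>1) (rev ws1 @ ws2))"
proof (intro conjI allI impI)
  fix ws and \<pi> :: "'i lweight"
  assume "reduced_word A ws \<and> in_Pq \<pi>"
  thus "wt (braid_Tw A d q ws \<pi>) = weyl_act A ws (wt \<pi>)"
    using Tw_wt[OF assms(1) assms(2) inPq_nzw] by blast
next
  fix \<pi>1 \<pi>2 :: "'i lweight" and ws1 ws2
  assume H: "in_Pq \<pi>1 \<and> in_Pq \<pi>2 \<and> dominant (wt \<pi>1) \<and> dominant (wt \<pi>2)
            \<and> reduced_word A ws1 \<and> reduced_word A ws2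
            \<and> braid_Tw A d q ws1 \<pi>1 = braid_Tw A d q ws2 \<pi>2"
  have d2: "d2 A" by (rule sc_d2[OF assms(1)])
  have w1: "wt (braid_Tw A d q ws1 \<pi>1) = weyl_act A ws1 (wt \<pi>1)"
    using Tw_wt[OF assms(1) assms(2) inPq_nzw] H by blast
  have w2: "wt (braid_Tw A d q ws2 \<pi>2) = weyl_act A ws2 (wt \<pi>2)"
    using Tw_wt[OF assms(1) assms(2) inPq_nzw] H by blast
  have eq: "weyl_act A ws1 (wt \<pi>1) = weyl_act A ws2 (wt \<pi>2)" using w1 w2 H by simp
  have act: "weyl_act A (rev ws1 @ ws2) (wt \<pi>2) = wt \<pi>1"
    using eq W_rev_inv2[OF d2, of ws1 "wt \<pi>1"] by (simp add: W_append)
  obtain u where u: "length u = len A (rev ws1 @ ws2)" "weyl_act A u = weyl_act A (rev ws1 @ ws2)"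
    using len_ex by blast
  have lu: "length u = len A u" using u len_cong by metis
  have R: "weyl_act A u (wt \<pi>2) = wt \<pi>2 \<and> (\<exists>vs. set vs \<subseteq> {i. wt \<pi>2 i = 0} \<and> weyl_act A vs = weyl_act A u)"
  proof -
    have "dominant (wt \<pi>2)" "dominant (weyl_act A u (wt \<pi>2))" using H act u(2) by simp_all
    thus ?thesis using dom_stab[OF assms(1) lu] by blast
  qed
  have e12: "wt \<pi>1 = wt \<pi>2" using R act u(2) by simp
  show "wt \<pi>1 = wt \<pi>2" by (rule e12)
  show "in_stab_subgroup A (wt \<pi>1) (rev ws1 @ ws2)"
    unfolding in_stab_subgroup_def using R e12 u(2) by simp
qed

end
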